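(* Assume (FWW) for a flow $\Phi_t$ on $\mathbb{R}^n$ and a $k$-cone $C$. Let $K\subset\mathbb{R}^n$ be a compact invariant set and let $\mathbb{R}^n=E_y\oplus F_y$, $y\in K$, be a $k$-exponential separation of $(\Phi_t,D\Phi_t)$ along $K$ associated with $C$. Then there exists a constant $\delta''>0$ such that $d(v,C)>\delta''$ for every $v\in\bigcup_{y\in K}(F_y\cap S)$, where $S$ is the unit sphere of $\mathbb{R}^n$ and $d(v,C)=\inf_{w\in C}\|v-w\|$.
   Context: A closed set $C\subset\mathbb{R}^n$ is a $k$-cone if $lv\in C$ for all $v\in C$, $l\in\mathbb{R}$, and the maximal dimension of a linear subspace contained in $C$ is $k$. $C$ is $k$-solid if there is a $k$-dimensional subspace $W$ with $W\setminus\{0\}\subset\operatorname{Int}C$. Write $x\sim y$ if $x-y\in C$ and $x\approx y$ if $x-y\in\operatorname{Int}C$. A flow $\Phi_t$ is strongly monotone with respect to a $k$-solid cone $C$ if $x\sim y$ implies $\Phi_t(x)\sim\Phi_t(y)$ for $t\ge0$, and $x\ne y$, $x\sim y$ imply $\Phi_t(x)\approx\Phi_t(y)$ for $t>0$. Assumption (FWW): the flow $\Phi_t$ on $\mathbb{R}^n$ is $C^{1,\alpha}$-smooth ($C^1$ with locally $\alpha$-Hölder derivative, $\alpha\in(0,1]$), strongly monotone with respect to the $k$-cone $C$, and $D_x\Phi_t(C\setminus\{0\})\subset\operatorname{Int}C$ for $t>0$. A $k$-exponential separation along a compact invariant set $K$ associated with $C$ consists of continuous (in the Grassmannian gap metric)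 families of $k$-dimensional subspaces $E_x$ and $(n-k)$-dimensional subspaces $F_x$, $x\in K$, such that: $\mathbb{R}^n=E_x\oplus F_x$; $D_x\Phi_tE_x=E_{\Phi_t(x)}$, $D_x\Phi_tF_x\subset F_{\Phi_t(x)}$ for $t>0$; there are $M>0$, $0<\gamma<1$ with $\|D_x\Phi_tw\|\le M\gamma^t\|D_x\Phi_tv\|$ for all $x\in K$, unit $w\in F_x$, unit $v\in E_x$, $t\ge0$; and $E_x\subset\operatorname{Int}C\cup\{0\}$, $F_x\cap C=\{0\}$. *)

theory Defs
  imports "HOL-Analysis.Analysis"
begin

definition k_cone :: "'a::euclidean_space set \<Rightarrow> nat \<Rightarrow> bool" where
  "k_cone C k \<longleftrightarrow> closed C \<and> (\<forall>v\<in>C. \<forall>l::real. l *\<^sub>R v \<in> C) \<and>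
     (\<exists>W. subspace W \<and> W \<subseteq> C \<and> dim W = k) \<and>
     (\<forall>W. subspace W \<and> W \<subseteq> C \<longrightarrow> dim W \<le> k)"

definition k_solid :: "'a::euclidean_space set \<Rightarrow> nat \<Rightarrow> bool" where
  "k_solid C k \<longleftrightarrow> (\<exists>W. subspace W \<and> dim W = k \<and> W - {0} \<subseteq> interior C)"

definition is_flow :: "(real \<Rightarrow> 'a::euclidean_space \<Rightarrow> 'a) \<Rightarrow> bool" where
  "is_flow \<Phi> \<longleftrightarrow> (\<forall>x. \<Phi> 0 x = x) \<and> (\<forall>s t x. \<Phi> (s + t) x = \<Phi> s (\<Phi> t x)) \<and>
     continuous_on UNIV (\<lambda>(t, x). \<Phi> t x)"

definition C1_alpha_flow ::
  "real \<Rightarrow> (real \<Rightarrow> 'a::euclidean_space \<Rightarrow> 'a) \<Rightarrow> (real \<Rightarrow> 'a \<Rightarrow> 'a \<Rightarrow>\<^sub>L 'a) \<Rightarrow> bool" where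
  "C1_alpha_flow \<alpha> \<Phi> D \<longleftrightarrow>
     (\<forall>t x. (\<Phi> t has_derivative blinfun_apply (D t x)) (at x)) \<and>
     (\<forall>t. continuous_on UNIV (D t)) \<and>
     (\<forall>t x0. \<exists>r>0. \<exists>L. \<forall>x\<in>ball x0 r. \<forall>y\<in>ball x0 r.
         norm (D t x - D t y) \<le> L * dist x y powr \<alpha>)"

definition strongly_monotone ::
  "(real \<Rightarrow> 'a::euclidean_space \<Rightarrow> 'a) \<Rightarrow> 'a set \<Rightarrow> bool" where
  "strongly_monotone \<Phi> C \<longleftrightarrow>
     (\<forall>x y t. x - y \<in> C \<and> t \<ge> 0 \<longrightarrow> \<Phi> t x - \<Phi> t y \<in> C) \<and>
     (\<forall>x y t. x \<noteq> y \<and> x - y \<in> C \<and> t > 0 \<longrightarrow> \<Phi> t x - \<Phi> t y \<in> interior C)"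

definition FWW ::
  "real \<Rightarrow> (real \<Rightarrow> 'a::euclidean_space \<Rightarrow> 'a) \<Rightarrow> (real \<Rightarrow> 'a \<Rightarrow> 'a \<Rightarrow>\<^sub>L 'a) \<Rightarrow> 'a set \<Rightarrow> nat \<Rightarrow> bool" where
  "FWW \<alpha> \<Phi> D C k \<longleftrightarrow> 0 < \<alpha> \<and> \<alpha> \<le> 1 \<and> is_flow \<Phi> \<and> C1_alpha_flow \<alpha> \<Phi> D \<and>
     k_cone C k \<and> k_solid C k \<and> strongly_monotone \<Phi> C \<and>
     (\<forall>t x v. t > 0 \<and> v \<in> C - {0} \<longrightarrow> D t x v \<in> interior C)"

definition half_gap :: "'a::euclidean_space set \<Rightarrow> 'a set \<Rightarrow> real" where
  "half_gap U V = (if U \<inter> sphere 0 1 = {} then 0 else (SUP u\<in>U \<inter> sphere 0 1. infdist u V))"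

definition gap :: "'a::euclidean_space set \<Rightarrow> 'a set \<Rightarrow> real" where
  "gap U V = max (half_gap U V) (half_gap V U)"

definition gap_continuous_on :: "'a::euclidean_space set \<Rightarrow> ('a \<Rightarrow> 'a set) \<Rightarrow> bool" where
  "gap_continuous_on K E \<longleftrightarrow>
     (\<forall>y\<in>K. \<forall>\<epsilon>>0. \<exists>\<delta>>0. \<forall>z\<in>K. dist z y < \<delta> \<longrightarrow> gap (E z) (E y) < \<epsilon>)"

definition invariant_set :: "(real \<Rightarrow> 'a \<Rightarrow> 'a) \<Rightarrow> 'a set \<Rightarrow> bool" where
  "invariant_set \<Phi> K \<longleftrightarrow> (\<forall>t. \<Phi> t ` K = K)"

definition exp_separation ::
  "(real \<Rightarrow> 'a::euclidean_space \<Rightarrow> 'a) \<Rightarrow> (real \<Rightarrow> 'a \<Rightarrow> 'a \<Rightarrow>\<^sub>L 'a) \<Rightarrow> 'a set \<Rightarrow> nat \<Rightarrow> 'a set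
    \<Rightarrow> ('a \<Rightarrow> 'a set) \<Rightarrow> ('a \<Rightarrow> 'a set) \<Rightarrow> bool" where
  "exp_separation \<Phi> D C k K E F \<longleftrightarrow>
     (\<forall>x\<in>K. subspace (E x) \<and> dim (E x) = k \<and> subspace (F x) \<and> dim (F x) = DIM('a) - k) \<and>
     gap_continuous_on K E \<and> gap_continuous_on K F \<and>
     (\<forall>x\<in>K. E x + F x = UNIV \<and> E x \<inter> F x = {0}) \<and>
     (\<forall>x\<in>K. \<forall>t>0. blinfun_apply (D t x) ` E x = E (\<Phi> t x) \<and>
                   blinfun_apply (D t x) ` F x \<subseteq> F (\<Phi> t x)) \<and>
     (\<exists>M>0. \<exists>\<gamma>. 0 < \<gamma> \<and> \<gamma> < 1 \<and>
        (\<forall>x\<in>K. \<forall>w\<in>F x. \<forall>v\<in>E x. \<forall>t\<ge>0. norm w = 1 \<and> norm v = 1 \<longrightarrow>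
            norm (D t x w) \<le> M * \<gamma> powr t * norm (D t x v))) \<and>
     (\<forall>x\<in>K. E x \<subseteq> interior C \<union> {0} \<and> F x \<inter> C = {0})"

end

theory Submission
  imports Defs
begin

lemma infdist_le_gap:
  fixes U V :: "'a::euclidean_space set"
  assumes "subspace V" "v \<in> U" "norm v = 1"
  shows "infdist v V \<le> gap U V"
proof -
  have ne: "U \<inter> sphere 0 1 \<noteq> {}" using assms by auto
  have bdd: "bdd_above ((\<lambda>u. infdist u V) ` (U \<inter> sphere 0 1))"
  proof (rule bdd_aboveI2)
    fix u assume "u \<in> U \<inter> sphere 0 1"
    then have "infdist u V \<le> dist u 0" using assms(1) by (intro infdist_le) (simp add: subspace_0)
    then show "infdist u V \<le> 1" using \<open>u \<in> U \<inter> sphere 0 1\<close> by simp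
  qed
  have "infdist v V \<le> half_gap U V"
    unfolding half_gap_def using ne bdd assms by (auto intro!: cSUP_upper)
  then show ?thesis unfolding gap_def by linarith
qed

theorem lemma3p4:
  fixes \<Phi> :: "real \<Rightarrow> 'a::euclidean_space \<Rightarrow> 'a"
    and D :: "real \<Rightarrow> 'a \<Rightarrow> 'a \<Rightarrow>\<^sub>L 'a"
    and C K :: "'a set" and k :: nat and \<alpha> :: real
    and E F :: "'a \<Rightarrow> 'a set"
  assumes "FWW \<alpha> \<Phi> D C k"
    and "compact K" and "invariant_set \<Phi> K"
    and "exp_separation \<Phi> D C k K E F"
  shows "\<exists>\<delta>>0. \<forall>y\<in>K. \<forall>v\<in>F y \<inter> sphere 0 1. infdist v C > \<delta>"
proof -
  have kc: "k_cone C k" using assms(1) unfolding FWW_def by (elim conjE)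
  have Ccl: "closed C" using kc unfolding k_cone_def by (elim conjE)
  have C0: "0 \<in> C"
  proof -
    have "\<exists>W. subspace W \<and> W \<subseteq> C \<and> dim W = k" using kc unfolding k_cone_def by (elim conjE)
    then obtain W where "subspace W" "W \<subseteq> C" by blast
    then show ?thesis by (auto simp: subspace_0)
  qed
  have A1: "\<forall>x\<in>K. subspace (E x) \<and> dim (E x) = k \<and> subspace (F x) \<and> dim (F x) = DIM('a) - k"
    using assms(4) unfolding exp_separation_def by (elim conjE)
  have gc: "gap_continuous_on K F"
    using assms(4) unfolding exp_separation_def by (elim conjE)
  have A2: "\<forall>x\<in>K. E x \<subseteq> interior C \<union> {0} \<and> F x \<inter> C = {0}"
    using assms(4) unfolding exp_separation_def by (elim conjE)
  have sub: "\<And>x. x \<in> K \<Longrightarrow> subspace (F x)" using A1 by blast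
  have FC: "\<And>x. x \<in> K \<Longrightarrow> F x \<inter> C = {0}" using A2 by blast
  define S where "S = {p. fst p \<in> K \<and> snd p \<in> F (fst p) \<and> norm (snd p) = 1}"
  have Ssub: "S \<subseteq> K \<times> sphere 0 1" unfolding S_def by auto
  have bS: "bounded S"
    by (rule bounded_subset[OF _ Ssub]) (simp add: assms(2) bounded_Times compact_imp_bounded)
  have cS: "closed S"
    unfolding closed_sequential_limits
  proof (intro allI impI, elim conjE)
    fix x :: "nat \<Rightarrow> 'a \<times> 'a" and l
    assume xS: "\<forall>n. x n \<in> S" and lim: "x \<longlonglongrightarrow> l"
    obtain y v where l: "l = (y, v)" by (rule prod.exhaust)
    have l1: "(\<lambda>n. fst (x n)) \<longlonglongrightarrow> y" using tendsto_fst[OF lim] l by simp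
    have l2: "(\<lambda>n. snd (x n)) \<longlonglongrightarrow> v" using tendsto_snd[OF lim] l by simp
    have yK: "y \<in> K"
    proof -
      have "\<forall>n. fst (x n) \<in> K" using xS unfolding S_def by auto
      moreover have "closed K" using compact_imp_closed[OF assms(2)] .
      ultimately show ?thesis
        using l1 closed_sequential_limits[of K] by (simp only:)
    qed
    have nv: "norm v = 1"
    proof -
      have "(\<lambda>n. norm (snd (x n))) \<longlonglongrightarrow> norm v" by (rule tendsto_norm[OF l2])
      moreover have "(\<lambda>n. norm (snd (x n))) = (\<lambda>n. 1)" using xS unfolding S_def by auto
      ultimately have "(\<lambda>n. 1::real) \<longlonglongrightarrow> norm v" by simp
      then show ?thesis by (simp add: LIMSEQ_const_iff)
    qed
    have "infdist v (F y) = 0"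
    proof (rule ccontr)
      assume "infdist v (F y) \<noteq> 0"
      then have pos: "infdist v (F y) > 0" using infdist_nonneg[of v "F y"] by linarith
      define e where "e = infdist v (F y) / 2"
      have e: "e > 0" using pos e_def by simp
      obtain d where d: "d > 0" "\<And>z. z \<in> K \<Longrightarrow> dist z y < d \<Longrightarrow> gap (F z) (F y) < e"
        using gc yK e unfolding gap_continuous_on_def by blast
      have ev1: "eventually (\<lambda>n. dist (fst (x n)) y < d) sequentially"
        using l1 d(1) by (rule tendstoD)
      have ev2: "eventually (\<lambda>n. dist (snd (x n)) v < e) sequentially"
        using l2 e by (rule tendstoD)
      obtain N where N: "\<And>n. n \<ge> N \<Longrightarrow> dist (fst (x n)) y < d \<and> dist (snd (x n)) v < e"
        using eventually_conj[OF ev1 ev2] unfolding eventually_sequentially by blast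
      define n where "n = N"
      have n1: "dist (fst (x n)) y < d" and n2: "dist (snd (x n)) v < e" using N[of N] n_def by auto
      have xn: "fst (x n) \<in> K" "snd (x n) \<in> F (fst (x n))" "norm (snd (x n)) = 1"
        using xS unfolding S_def by auto
      have "infdist (snd (x n)) (F y) \<le> gap (F (fst (x n))) (F y)"
        by (rule infdist_le_gap[OF sub[OF yK] xn(2) xn(3)])
      also have "\<dots> < e" using d(2)[OF xn(1) n1] .
      finally have "infdist v (F y) < e + e"
        using infdist_triangle[of v "F y" "snd (x n)"] n2 by (simp add: dist_commute)
      then show False using e_def by simp
    qed
    moreover have "F y \<noteq> {}" using subspace_0[OF sub[OF yK]] by blast
    ultimately have "v \<in> F y"
      using in_closed_iff_infdist_zero[OF closed_subspace[OF sub[OF yK]]] by blast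
    then show "l \<in> S" unfolding S_def l using yK nv by simp
  qed
  have cpt: "compact S" using bS cS by (simp add: compact_eq_bounded_closed)
  show ?thesis
  proof (cases "S = {}")
    case True
    show ?thesis
    proof (intro exI[of _ 1] conjI ballI)
      fix y v assume "y \<in> K" "v \<in> F y \<inter> sphere 0 1"
      then have "(y, v) \<in> S" unfolding S_def by simp
      then show "infdist v C > 1" using True by simp
    qed simp
  next
    case False
    have cont: "continuous_on S (\<lambda>p. infdist (snd p) C)"
      by (intro continuous_on_infdist continuous_intros)
    obtain p where pS: "p \<in> S" and pmin: "\<And>q. q \<in> S \<Longrightarrow> infdist (snd p) C \<le> infdist (snd q) C"
      using continuous_attains_inf[OF cpt False cont] by blast
    have "snd p \<notin> C"
    proof
      assume "snd p \<in> C"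
      moreover have "snd p \<in> F (fst p)" "fst p \<in> K" "norm (snd p) = 1" using pS unfolding S_def by auto
      ultimately have "snd p \<in> F (fst p) \<inter> C" "fst p \<in> K" "norm (snd p) = 1" by auto
      then have "snd p = 0" using FC by blast
      then show False using \<open>norm (snd p) = 1\<close> by simp
    qed
    then have pos: "infdist (snd p) C > 0"
      using infdist_pos_not_in_closed[OF Ccl] C0 by auto
    show ?thesis
    proof (intro exI[of _ "infdist (snd p) C / 2"] conjI ballI)
      show "infdist (snd p) C / 2 > 0" using pos by simp
    next
      fix y v assume "y \<in> K" "v \<in> F y \<inter> sphere 0 1"
      then have "(y, v) \<in> S" unfolding S_def by auto
      from pmin[OF this] pos show "infdist v C > infdist (snd p) C / 2" by simp
    qed
  qed
qed

end
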